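(* Every factor-critical vertex-stable equimatchable graph is a complete graph on an odd number of vertices.
   Context: All graphs are finite and simple. A graph is equimatchable if all its maximal matchings have the same cardinality. A graph $G$ is vertex-stable equimatchable if $G$ is equimatchable and $G-v$ is equimatchable for every $v\in V(G)$. A graph $G$ is factor-critical if $G-v$ has a perfect matching for every $v\in V(G)$. *)

theory Defs
  imports Main
begin

definition graph :: "'a set \<Rightarrow> 'a set set \<Rightarrow> bool" where
  "graph V E \<longleftrightarrow> finite V \<and> (\<forall>e\<in>E. \<exists>u v. e = {u, v} \<and> u \<noteq> v \<and> u \<in> V \<and> v \<in> V)"

definition matching :: "'a set set \<Rightarrow> 'a set set \<Rightarrow> bool" where
  "matching E M \<longleftrightarrow> M \<subseteq> E \<and> (\<forall>e1\<in>M. \<forall>e2\<in>M. e1 \<noteq> e2 \<longrightarrow> e1 \<inter> e2 = {})"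

definition maximal_matching :: "'a set set \<Rightarrow> 'a set set \<Rightarrow> bool" where
  "maximal_matching E M \<longleftrightarrow> matching E M \<and> (\<forall>M'. matching E M' \<and> M \<subseteq> M' \<longrightarrow> M' = M)"

definition perfect_matching :: "'a set \<Rightarrow> 'a set set \<Rightarrow> 'a set set \<Rightarrow> bool" where
  "perfect_matching V E M \<longleftrightarrow> matching E M \<and> \<Union>M = V"

definition equimatchable :: "'a set set \<Rightarrow> bool" where
  "equimatchable E \<longleftrightarrow>
     (\<forall>M1 M2. maximal_matching E M1 \<and> maximal_matching E M2 \<longrightarrow> card M1 = card M2)"

definition del_edges :: "'a set set \<Rightarrow> 'a \<Rightarrow> 'a set set" where
  "del_edges E v = {e \<in> E. v \<notin> e}"

definition vertex_stable_equimatchable :: "'a set \<Rightarrow> 'a set set \<Rightarrow> bool" where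
  "vertex_stable_equimatchable V E \<longleftrightarrow>
     equimatchable E \<and> (\<forall>v\<in>V. equimatchable (del_edges E v))"

definition factor_critical :: "'a set \<Rightarrow> 'a set set \<Rightarrow> bool" where
  "factor_critical V E \<longleftrightarrow> (\<forall>v\<in>V. \<exists>M. perfect_matching (V - {v}) (del_edges E v) M)"

definition complete_graph :: "'a set \<Rightarrow> 'a set set \<Rightarrow> bool" where
  "complete_graph V E \<longleftrightarrow> E = {{u, v} | u v. u \<in> V \<and> v \<in> V \<and> u \<noteq> v}"

end

theory Submission
  imports Defs
begin

lemma edge_card: "graph V E \<Longrightarrow> e \<in> E \<Longrightarrow> card e = 2 \<and> e \<subseteq> V"
  unfolding graph_def by fastforce

lemma match_card:
  assumes g: "graph V E" and m: "matching E M"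
  shows "card (\<Union>M) = 2 * card M"
proof -
  have sub: "M \<subseteq> E" using m by (simp add: matching_def)
  have "E \<subseteq> Pow V" using edge_card[OF g] by blast
  moreover have "finite V" using g by (simp add: graph_def)
  ultimately have "finite M" using sub by (meson finite_Pow_iff finite_subset)
  have pw: "pairwise disjnt M" using m unfolding matching_def pairwise_def disjnt_def by blast
  have c2: "\<And>e. e \<in> M \<Longrightarrow> card e = 2" using edge_card[OF g] sub by blast
  have fin: "\<And>e. e \<in> M \<Longrightarrow> finite e" using c2 by (metis card.infinite zero_neq_numeral)
  have "card (\<Union>M) = sum card M" by (rule card_Union_disjoint[OF pw fin])
  also have "\<dots> = sum (\<lambda>_. 2) M" using c2 by (rule sum.cong[OF refl])
  also have "\<dots> = 2 * card M" by simp
  finally show ?thesis .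
qed

lemma perfect_maximal:
  assumes g: "graph V E" and p: "perfect_matching (V - {x}) (del_edges E x) P"
  shows "maximal_matching (del_edges E x) P"
  unfolding maximal_matching_def
proof (intro conjI allI impI)
  show "matching (del_edges E x) P" using p by (simp add: perfect_matching_def)
  fix M' assume a: "matching (del_edges E x) M' \<and> P \<subseteq> M'"
  show "M' = P"
  proof (rule ccontr)
    assume "M' \<noteq> P"
    then obtain e where e: "e \<in> M'" "e \<notin> P" using a by blast
    have eE: "e \<in> E" "x \<notin> e" using e a by (auto simp: matching_def del_edges_def)
    then obtain a' b where ab: "e = {a', b}" "a' \<in> V" using g unfolding graph_def by blast
    have "a' \<in> \<Union>P" using p ab eE by (auto simp: perfect_matching_def)
    then obtain f where f: "f \<in> P" "a' \<in> f" by blast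
    have "f \<in> M'" "f \<noteq> e" using f a e by auto
    hence "f \<inter> e = {}" using a e unfolding matching_def by blast
    thus False using f ab by blast
  qed
qed

theorem lemma7p3:
  fixes V :: "'a set" and E :: "'a set set"
  assumes "graph V E" and "V \<noteq> {}"
    and "factor_critical V E" and "vertex_stable_equimatchable V E"
  shows "complete_graph V E \<and> odd (card V)"
proof -
  note g = assms(1)
  have finV: "finite V" using g by (simp add: graph_def)
  obtain v0 where v0: "v0 \<in> V" using assms(2) by blast
  obtain M0 where M0: "perfect_matching (V - {v0}) (del_edges E v0) M0"
    using assms(3) v0 by (auto simp: factor_critical_def)
  have "matching (del_edges E v0) M0" using M0 by (simp add: perfect_matching_def)
  have gx0: "graph V (del_edges E v0)" using g unfolding graph_def del_edges_def by auto
  have "card (V - {v0}) = 2 * card M0" using M0 match_card[OF gx0 \<open>matching (del_edges E v0) M0\<close>]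
    unfolding perfect_matching_def by auto
  moreover have "card (V - {v0}) = card V - 1" using v0 finV by simp
  moreover have "card V > 0" using v0 finV by (auto simp: card_gt_0_iff)
  ultimately have "card V = 2 * card M0 + 1" by linarith
  hence odd: "odd (card V)" by simp
  have gx: "graph V (del_edges E y)" for y using g unfolding graph_def del_edges_def by auto
  have complete: "{{u, w} | u w. u \<in> V \<and> w \<in> V \<and> u \<noteq> w} \<subseteq> E"
  proof
    fix e assume "e \<in> {{u, w} | u w. u \<in> V \<and> w \<in> V \<and> u \<noteq> w}"
    then obtain u w where uw: "e = {u,w}" "u \<in> V" "w \<in> V" "u \<noteq> w" by blast
    show "e \<in> E"
    proof (rule ccontr)
      assume nE: "e \<notin> E"
      obtain M where M: "perfect_matching (V - {u}) (del_edges E u) M"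
        using assms(3) uw by (auto simp: factor_critical_def)
      have Mm: "matching (del_edges E u) M" "\<Union>M = V - {u}" using M by (auto simp: perfect_matching_def)
      have "w \<in> \<Union>M" using Mm uw by auto
      then obtain f where f: "f \<in> M" "w \<in> f" by blast
      have fE: "f \<in> E" "u \<notin> f" using f Mm by (auto simp: matching_def del_edges_def)
      then obtain a b where ab: "f = {a,b}" "a \<noteq> b" "a \<in> V" "b \<in> V" using g unfolding graph_def by blast
      obtain x where x: "f = {w, x}" "x \<noteq> w" "x \<in> V" using ab f by auto
      have xu: "x \<noteq> u" using fE x by auto
      define M' where "M' = M - {f}"
      have disj: "\<And>h. h \<in> M \<Longrightarrow> h \<noteq> f \<Longrightarrow> h \<inter> f = {}" using Mm f unfolding matching_def by blast
      have UM': "\<Union>M' = V - {u, w, x}"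
      proof -
        have "\<Union>M' = \<Union>M - f"
        proof
          show "\<Union>M' \<subseteq> \<Union>M - f" unfolding M'_def using disj by blast
          show "\<Union>M - f \<subseteq> \<Union>M'" unfolding M'_def by blast
        qed
        thus ?thesis using Mm x by auto
      qed
      have M'm: "matching (del_edges E x) M'"
        unfolding matching_def
      proof
        show "M' \<subseteq> del_edges E x"
        proof
          fix h assume h: "h \<in> M'"
          hence "h \<in> M" "h \<noteq> f" by (auto simp: M'_def)
          hence "h \<in> E" "h \<inter> f = {}" using Mm(1) disj by (auto simp: matching_def del_edges_def)
          thus "h \<in> del_edges E x" using x by (auto simp: del_edges_def)
        qed
        show "\<forall>e1\<in>M'. \<forall>e2\<in>M'. e1 \<noteq> e2 \<longrightarrow> e1 \<inter> e2 = {}"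
          using Mm(1) unfolding matching_def M'_def by blast
      qed
      have M'max: "maximal_matching (del_edges E x) M'"
        unfolding maximal_matching_def
      proof (intro conjI allI impI)
        show "matching (del_edges E x) M'" by (fact M'm)
        fix N assume a: "matching (del_edges E x) N \<and> M' \<subseteq> N"
        show "N = M'"
        proof (rule ccontr)
          assume "N \<noteq> M'"
          then obtain h where h: "h \<in> N" "h \<notin> M'" using a by blast
          have hE: "h \<in> E" "x \<notin> h" using h a by (auto simp: matching_def del_edges_def)
          then obtain c d where cd: "h = {c, d}" "c \<noteq> d" "c \<in> V" "d \<in> V"
            using g unfolding graph_def by blast
          have nc: "y \<notin> \<Union>M'" if "y \<in> h" for y
          proof
            assume "y \<in> \<Union>M'"
            then obtain k where k: "k \<in> M'" "y \<in> k" by blast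
            have "k \<in> N" "k \<noteq> h" using k a h by auto
            hence "k \<inter> h = {}" using a h unfolding matching_def by blast
            thus False using k that by blast
          qed
          have "c \<in> {u, w}" "d \<in> {u, w}" using nc[of c] nc[of d] cd hE UM' by auto
          hence "h = {u, w}" using cd uw by auto
          thus False using hE nE uw by simp
        qed
      qed
      obtain P where P: "perfect_matching (V - {x}) (del_edges E x) P"
        using assms(3) x by (auto simp: factor_critical_def)
      have Pmax: "maximal_matching (del_edges E x) P" by (rule perfect_maximal[OF g P])
      have "equimatchable (del_edges E x)"
        using assms(4) x by (simp add: vertex_stable_equimatchable_def)
      hence ceq: "card M' = card P" using Pmax M'max unfolding equimatchable_def by blast
      have c1: "card (V - {u, w, x}) = 2 * card M'" using match_card[OF gx M'm] UM' by simp
      have c2: "card (V - {x}) = 2 * card P"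
        using match_card[OF gx, of x P] P by (simp add: perfect_matching_def)
      have "card (V - {u, w, x}) = card V - 3"
        using finV uw x xu by (subst card_Diff_subset) auto
      moreover have "card (V - {x}) = card V - 1" using finV x by simp
      moreover have "card V \<ge> 3"
      proof -
        have "{u, w, x} \<subseteq> V" using uw x by auto
        hence "card {u, w, x} \<le> card V" using finV card_mono by blast
        thus ?thesis using uw x xu by auto
      qed
      ultimately show False using c1 c2 ceq by linarith
    qed
  qed
  have "E \<subseteq> {{u, w} | u w. u \<in> V \<and> w \<in> V \<and> u \<noteq> w}" using g unfolding graph_def by blast
  thus ?thesis using complete odd by (auto simp: complete_graph_def)
qed

end
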